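(* Let $(\mathcal{P},\Sigma)$ be a measurable space, let $\mathbb{P}^+,\mathbb{P}^-$ be mutually singular probability measures on it, let $\beta\in(0,1)$ and $\mathbb{P}_m=\beta\mathbb{P}^++(1-\beta)\mathbb{P}^-$, and fix $a>0$, $\gamma\in(0,1]$. For a measurable $D:\mathcal{P}\to[0,+\infty)$ and a probability measure $\mathbb{Q}$ on $\mathcal{P}$ (the generated patch-feature distribution $\mathbb{P}_g^{(h,w)}$), define $$L_D(D,\mathbb{Q})=\gamma\,\mathbb{E}_{p\sim\mathbb{Q}}\max(0,a-D(p))+(1-\gamma)\,\mathbb{E}_{p\sim\mathbb{P}_m}\max(0,a-D(p))+\mathbb{E}_{p\sim\mathbb{P}^+}D(p),$$ $$L_G(D,\mathbb{Q})=\gamma\,\mathbb{E}_{p\sim\mathbb{Q}}D(p)+(1-\gamma)\,\mathbb{E}_{p\sim\mathbb{P}_m}D(p)-\mathbb{E}_{p\sim\mathbb{P}^+}D(p).$$ Then there is a Nash equilibrium $(D^*,\mathbb{Q}^* )$ with $\mathbb{Q}^*=\mathbb{P}^+$: there exists a measurable $D^*:\mathcal{P}\to[0,a]$ such that (i) $L_D(D^*,\mathbb{P}^+)\le L_D(D,\mathbb{P}^+)$ for every measurable $D:\mathcal{P}\to[0,+\infty)$, and (ii) $L_G(D^*,\mathbb{P}^+)\le L_G(D^*,\mathbb{Q})$ for every probability measure $\mathbb{Q}$ on $\mathcal{P}$.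
   Context: $\mathbb{P}^+$ and $\mathbb{P}^-$ model the distributions of normal and anomalous patch features; $\mathbb{P}_m$ is the (known) distribution of patch features from anomalous images, which mixes normal and anomalous patches with unknown ratio $\beta$. The generator at a fixed patch position is identified with its output distribution $\mathbb{Q}$, which may be any probability measure on $\mathcal{P}$. "Mutually singular" means there is a measurable set $S$ with $\mathbb{P}^+(S)=1$ and $\mathbb{P}^-(S)=0$. The discriminator minimizes $L_D$ and the generator minimizes $L_G$. *)

theory Defs
  imports "HOL-Probability.Probability"
begin

text \<open>Discriminator loss. All integrands are nonnegative, so expectations are
  nonnegative Lebesgue integrals (possibly infinite), valued in ennreal.\<close>
definition L_D :: "real \<Rightarrow> real \<Rightarrow> 'a measure \<Rightarrow> 'a measure \<Rightarrow> ('a \<Rightarrow> real) \<Rightarrow> 'a measure \<Rightarrow> ennreal" where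
  "L_D a \<gamma> Pm Pp D Q =
     ennreal \<gamma> * (\<integral>\<^sup>+ p. ennreal (max 0 (a - D p)) \<partial>Q)
   + ennreal (1 - \<gamma>) * (\<integral>\<^sup>+ p. ennreal (max 0 (a - D p)) \<partial>Pm)
   + (\<integral>\<^sup>+ p. ennreal (D p) \<partial>Pp)"

text \<open>Generator loss (real-valued Lebesgue integrals; it is only evaluated at a
  bounded measurable discriminator, where all expectations are finite).\<close>
definition L_G :: "real \<Rightarrow> 'a measure \<Rightarrow> 'a measure \<Rightarrow> ('a \<Rightarrow> real) \<Rightarrow> 'a measure \<Rightarrow> real" where
  "L_G \<gamma> Pm Pp D Q =
     \<gamma> * (\<integral> p. D p \<partial>Q) + (1 - \<gamma>) * (\<integral> p. D p \<partial>Pm) - (\<integral> p. D p \<partial>Pp)"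

end

theory Submission
  imports Defs
begin

theorem theorem2:
  fixes M Pp Pn Pm :: "'a measure" and \<beta> a \<gamma> :: real
  assumes "prob_space Pp" and "prob_space Pn"
    and "sets Pp = sets M" and "sets Pn = sets M"
    and "\<exists>S\<in>sets M. emeasure Pp S = 1 \<and> emeasure Pn S = 0"
    and "0 < \<beta>" and "\<beta> < 1"
    and "sets Pm = sets M"
    and "\<And>A. A \<in> sets M \<Longrightarrow> emeasure Pm A = ennreal \<beta> * emeasure Pp A + ennreal (1 - \<beta>) * emeasure Pn A"
    and "a > 0" and "0 < \<gamma>" and "\<gamma> \<le> 1"
  shows "\<exists>Dstar \<in> borel_measurable M. (\<forall>x\<in>space M. 0 \<le> Dstar x \<and> Dstar x \<le> a)
     \<and> (\<forall>D \<in> borel_measurable M. (\<forall>x\<in>space M. 0 \<le> D x) \<longrightarrow>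
           L_D a \<gamma> Pm Pp Dstar Pp \<le> L_D a \<gamma> Pm Pp D Pp)
     \<and> (\<forall>Q. prob_space Q \<and> sets Q = sets M \<longrightarrow>
           L_G \<gamma> Pm Pp Dstar Pp \<le> L_G \<gamma> Pm Pp Dstar Q)"
proof -
  obtain S where S: "S \<in> sets M" "emeasure Pp S = 1" "emeasure Pn S = 0"
    using assms(5) by blast
  interpret P: prob_space Pp by fact
  have spP: "space Pp = space M" using assms(3) by (rule sets_eq_imp_space_eq)
  have spm: "space Pm = space M" using assms(8) by (rule sets_eq_imp_space_eq)
  have SP: "S \<in> sets Pp" "S \<in> sets Pm" using S assms by auto
  have compl0: "emeasure Pp (space M - S) = 0"
    using P.prob_compl[OF SP(1)] S(2) spP
    by (metis P.emeasure_eq_measure P.prob_space SP(1) diff_self ennreal_0 ennreal_1 ennreal_inj measure_nonneg zero_le_one)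
  define Ds where "Ds = (\<lambda>x. a * indicator (space M - S) x :: real)"
  have Dsm: "Ds \<in> borel_measurable M" unfolding Ds_def using S(1) by measurable
  have Ds_rng: "\<forall>x\<in>space M. 0 \<le> Ds x \<and> Ds x \<le> a" using assms(10) by (auto simp: Ds_def indicator_def)
  define c where "c = \<gamma> + (1 - \<gamma>) * \<beta>"
  have c0: "0 \<le> c" "c \<le> 1" using assms(6,7,11,12) unfolding c_def
    by (auto intro!: add_nonneg_nonneg mult_nonneg_nonneg)
       (smt (verit, best) mult_left_le mult_nonneg_nonneg)
  have g1: "(\<integral>\<^sup>+ p. ennreal (max 0 (a - Ds p)) \<partial>Pp) = ennreal a"
  proof -
    have "(\<integral>\<^sup>+ p. ennreal (max 0 (a - Ds p)) \<partial>Pp) = (\<integral>\<^sup>+ p. ennreal a * indicator S p \<partial>Pp)"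
      apply (rule nn_integral_cong)
      using assms(10) S(1) sets.sets_into_space[OF S(1)] spP
      by (auto simp: Ds_def indicator_def)
    also have "\<dots> = ennreal a" using nn_integral_cmult_indicator[OF SP(1)] S(2) by simp
    finally show ?thesis .
  qed
  have g2: "(\<integral>\<^sup>+ p. ennreal (max 0 (a - Ds p)) \<partial>Pm) = ennreal a * ennreal \<beta>"
  proof -
    have "(\<integral>\<^sup>+ p. ennreal (max 0 (a - Ds p)) \<partial>Pm) = (\<integral>\<^sup>+ p. ennreal a * indicator S p \<partial>Pm)"
      apply (rule nn_integral_cong)
      using assms(10) S(1) sets.sets_into_space[OF S(1)] spm
      by (auto simp: Ds_def indicator_def)
    also have "\<dots> = ennreal a * ennreal \<beta>" using nn_integral_cmult_indicator[OF SP(2)] S assms(9)[OF S(1)] by simp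
    finally show ?thesis .
  qed
  have g3: "(\<integral>\<^sup>+ p. ennreal (Ds p) \<partial>Pp) = 0"
  proof -
    have "(\<integral>\<^sup>+ p. ennreal (Ds p) \<partial>Pp) = (\<integral>\<^sup>+ p. ennreal a * indicator (space M - S) p \<partial>Pp)"
      apply (rule nn_integral_cong)
      using assms(10) by (auto simp: Ds_def indicator_def)
    also have "\<dots> = 0" using nn_integral_cmult_indicator[of "space M - S" Pp] S(1) assms(3) compl0 by auto
    finally show ?thesis .
  qed
  have LDs: "L_D a \<gamma> Pm Pp Ds Pp = ennreal (c * a)"
    unfolding L_D_def g1 g2 g3 c_def using assms(6,7,10,11,12)
    by (simp add: ennreal_mult'[symmetric] ennreal_plus[symmetric] algebra_simps del: ennreal_plus)
  have part2: "L_D a \<gamma> Pm Pp Ds Pp \<le> L_D a \<gamma> Pm Pp D Pp"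
    if Dm: "D \<in> borel_measurable M" and Dpos: "\<forall>x\<in>space M. 0 \<le> D x" for D
  proof -
    define g where "g = (\<lambda>p. ennreal (max 0 (a - D p)))"
    have DmP: "D \<in> borel_measurable Pp"
      using Dm measurable_cong_sets[OF assms(3) refl] by auto
    have gm: "g \<in> borel_measurable Pp" unfolding g_def using DmP by measurable
    have Dm': "(\<lambda>p. ennreal (D p)) \<in> borel_measurable Pp"
      using DmP by measurable
    have le: "scale_measure (ennreal \<beta>) Pp \<le> Pm"
      unfolding le_measure_iff using assms(3,8) spP spm
      apply (auto simp: le_fun_def space_scale_measure)
      subgoal for A using assms(9)[of A] by (cases "A \<in> sets M") (auto simp: emeasure_notin_sets)
      done
    have "ennreal \<beta> * (\<integral>\<^sup>+ p. g p \<partial>Pp) = (\<integral>\<^sup>+ p. g p \<partial>scale_measure (ennreal \<beta>) Pp)"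
      using nn_integral_scale_measure[OF gm] by simp
    also have "\<dots> \<le> (\<integral>\<^sup>+ p. g p \<partial>Pm)"
      by (rule nn_integral_mono_measure[OF _ le]) (simp add: assms(3,8))
    finally have mix: "ennreal \<beta> * (\<integral>\<^sup>+ p. g p \<partial>Pp) \<le> (\<integral>\<^sup>+ p. g p \<partial>Pm)" .
    have "ennreal (c * a) = (\<integral>\<^sup>+ p. ennreal (c * a) \<partial>Pp)" by (simp add: P.emeasure_space_1)
    also have "\<dots> \<le> (\<integral>\<^sup>+ p. ennreal c * g p + ennreal (D p) \<partial>Pp)"
    proof (rule nn_integral_mono)
      fix x assume "x \<in> space Pp"
      then have "0 \<le> D x" using Dpos spP by auto
      then have "c * a \<le> c * max 0 (a - D x) + D x" using c0 assms(10)
      proof (cases "D x \<le> a")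
        case True
        have "0 \<le> (1 - c) * D x" using c0 \<open>0 \<le> D x\<close> by simp
        then show ?thesis using True by (simp add: max_def algebra_simps)
      next
        case False
        have "c * a \<le> a" using c0 assms(10) by (simp add: mult_left_le_one_le)
        then show ?thesis using False by (simp add: max_def)
      qed
      then show "ennreal (c * a) \<le> ennreal c * g x + ennreal (D x)"
      proof -
        have "ennreal c * g x + ennreal (D x) = ennreal (c * max 0 (a - D x) + D x)"
          unfolding g_def using c0 \<open>0 \<le> D x\<close>
          by (simp only: ennreal_mult'[symmetric] ennreal_plus[symmetric] max.cobounded1 mult_nonneg_nonneg)
        then show ?thesis using \<open>c * a \<le> _\<close> by (simp add: ennreal_leI)
      qed
    qed
    also have "\<dots> = ennreal c * (\<integral>\<^sup>+ p. g p \<partial>Pp) + (\<integral>\<^sup>+ p. ennreal (D p) \<partial>Pp)"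
      using gm Dm' by (simp add: nn_integral_add nn_integral_cmult)
    also have "ennreal c = ennreal \<gamma> + ennreal (1 - \<gamma>) * ennreal \<beta>"
      unfolding c_def using assms(6,11,12)
      by (simp add: ennreal_mult'[symmetric] ennreal_plus[symmetric] del: ennreal_plus)
    also have "(ennreal \<gamma> + ennreal (1 - \<gamma>) * ennreal \<beta>) * (\<integral>\<^sup>+ p. g p \<partial>Pp) + (\<integral>\<^sup>+ p. ennreal (D p) \<partial>Pp)
       = ennreal \<gamma> * (\<integral>\<^sup>+ p. g p \<partial>Pp) + ennreal (1 - \<gamma>) * (ennreal \<beta> * (\<integral>\<^sup>+ p. g p \<partial>Pp)) + (\<integral>\<^sup>+ p. ennreal (D p) \<partial>Pp)"
      by (simp add: distrib_right mult.assoc)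
    also have "\<dots> \<le> ennreal \<gamma> * (\<integral>\<^sup>+ p. g p \<partial>Pp) + ennreal (1 - \<gamma>) * (\<integral>\<^sup>+ p. g p \<partial>Pm) + (\<integral>\<^sup>+ p. ennreal (D p) \<partial>Pp)"
      using mix by (intro add_mono mult_left_mono order.refl) auto
    also have "\<dots> = L_D a \<gamma> Pm Pp D Pp" unfolding L_D_def g_def ..
    finally show ?thesis using LDs by simp
  qed
  have part3: "L_G \<gamma> Pm Pp Ds Pp \<le> L_G \<gamma> Pm Pp Ds Q"
    if Q: "prob_space Q" "sets Q = sets M" for Q
  proof -
    have spQ: "space Q = space M" using Q(2) by (rule sets_eq_imp_space_eq)
    have "(\<integral> p. Ds p \<partial>Pp) = a * measure Pp (space M - S)"
      unfolding Ds_def using S(1) assms(3) by simp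
    also have "\<dots> = 0" using compl0 by (simp add: measure_def)
    finally have i0: "(\<integral> p. Ds p \<partial>Pp) = 0" .
    have "0 \<le> (\<integral> p. Ds p \<partial>Q)"
      by (rule Bochner_Integration.integral_nonneg) (use assms(10) in \<open>auto simp: Ds_def\<close>)
    then show ?thesis unfolding L_G_def i0 using assms(11) by simp
  qed
  show ?thesis using Dsm Ds_rng part2 part3 by blast
qed

end
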